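(* Let $h\ge2$ be an integer and $a,b,c,d\in\{1,\dots,h-1\}$ integers, and let $Q=\operatorname{conv}\{(a,0),(0,b),(h,h-c),(h-d,h)\}$. Then $\operatorname{ls}_\square(Q)=h$. Moreover, $Q$ is minimal if and only if $$\min\{a,b\}+\min\{c,d\}>h\quad\text{or}\quad \max\{a,c\}+\max\{b,d\}<h.$$ Furthermore, $Q$ cannot satisfy both of these inequalities, and if $Q$ satisfies one of them, then $Q$ is lattice-equivalent to a quadrilateral of the same form (with parameters in $\{1,\dots,h-1\}$) that satisfies the other.
   Context: A lattice polygon is a convex polygon (possibly degenerate) all of whose vertices lie in $\mathbb Z^2$. An affine unimodular transformation is $x\mapsto Ax+v$ with $A\in\mathbb Z^{2\times2}$, $\det A=\pm1$, $v\in\mathbb Z^2$; two sets are lattice-equivalent if one is the image of the other under such a map. With $\square=[0,1]^2$, $\operatorname{ls}_\square(P)$ is the smallest $l\ge0$ such that $\varphi(P)\subseteq l\square$ for some affine unimodular $\varphi$. A lattice polygon $P$ with $\operatorname{ls}_\square(P)=h$ is minimal if no lattice polygon properly contained in $P$ has $\operatorname{ls}_\square$ equal to $h$. *)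

theory Defs
  imports "HOL-Analysis.Analysis"
begin

definition lattice_point :: "real \<times> real \<Rightarrow> bool" where
  "lattice_point p \<longleftrightarrow> fst p \<in> \<int> \<and> snd p \<in> \<int>"

text \<open>Lattice polygon: convex hull of a finite nonempty set of lattice points (possibly degenerate).\<close>
definition lattice_polygon :: "(real \<times> real) set \<Rightarrow> bool" where
  "lattice_polygon P \<longleftrightarrow>
     (\<exists>V. finite V \<and> V \<noteq> {} \<and> (\<forall>v\<in>V. lattice_point v) \<and> P = convex hull V)"

definition unimodular_affine :: "(real \<times> real \<Rightarrow> real \<times> real) \<Rightarrow> bool" where
  "unimodular_affine f \<longleftrightarrow>
     (\<exists>a11 a12 a21 a22 v1 v2 :: int.
        (a11 * a22 - a12 * a21 = 1 \<or> a11 * a22 - a12 * a21 = -1) \<and>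
        f = (\<lambda>(x, y). (of_int a11 * x + of_int a12 * y + of_int v1,
                       of_int a21 * x + of_int a22 * y + of_int v2)))"

definition lattice_equivalent :: "(real \<times> real) set \<Rightarrow> (real \<times> real) set \<Rightarrow> bool" where
  "lattice_equivalent A B \<longleftrightarrow> (\<exists>f. unimodular_affine f \<and> f ` A = B)"

definition unit_square :: "(real \<times> real) set" where
  "unit_square = {p. 0 \<le> fst p \<and> fst p \<le> 1 \<and> 0 \<le> snd p \<and> snd p \<le> 1}"

definition ls_square :: "(real \<times> real) set \<Rightarrow> real" where
  "ls_square P = Inf {l. 0 \<le> l \<and> (\<exists>f. unimodular_affine f \<and> f ` P \<subseteq> (\<lambda>p. l *\<^sub>R p) ` unit_square)}"

definition minimal_polygon :: "(real \<times> real) set \<Rightarrow> bool" where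
  "minimal_polygon P \<longleftrightarrow> lattice_polygon P \<and>
     \<not> (\<exists>P'. lattice_polygon P' \<and> P' \<subset> P \<and> ls_square P' = ls_square P)"

definition quadQ :: "int \<Rightarrow> int \<Rightarrow> int \<Rightarrow> int \<Rightarrow> int \<Rightarrow> (real \<times> real) set" where
  "quadQ h a b c d = convex hull {(of_int a, 0), (0, of_int b),
                                  (of_int h, of_int (h - c)), (of_int (h - d), of_int h)}"

definition condA :: "int \<Rightarrow> int \<Rightarrow> int \<Rightarrow> int \<Rightarrow> int \<Rightarrow> bool" where
  "condA h a b c d \<longleftrightarrow> min a b + min c d > h"

definition condB :: "int \<Rightarrow> int \<Rightarrow> int \<Rightarrow> int \<Rightarrow> int \<Rightarrow> bool" where
  "condB h a b c d \<longleftrightarrow> max a c + max b d < h"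

end

theory Submission imports Defs begin

lemma hull_lin:
  fixes V :: "(real \<times> real) set"
  assumes "\<forall>v\<in>V. \<alpha> * fst v + \<beta> * snd v \<le> k" "p \<in> convex hull V"
  shows "\<alpha> * fst p + \<beta> * snd p \<le> k"
proof -
  have cv: "convex {p::real\<times>real. \<alpha> * fst p + \<beta> * snd p \<le> k}"
    unfolding convex_def
  proof (clarify)
    fix x y :: "real\<times>real" and u v :: real
    assume uv: "0 \<le> u" "0 \<le> v" "u + v = 1" and hx: "\<alpha> * fst x + \<beta> * snd x \<le> k"
      and hy: "\<alpha> * fst y + \<beta> * snd y \<le> k"
    have "\<alpha> * fst (u *\<^sub>R x + v *\<^sub>R y) + \<beta> * snd (u *\<^sub>R x + v *\<^sub>R y)
        = u * (\<alpha> * fst x + \<beta> * snd x) + v * (\<alpha> * fst y + \<beta> * snd y)"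
      by (simp add: algebra_simps)
    also have "\<dots> \<le> u * k + v * k"
      by (intro add_mono mult_left_mono) (use uv hx hy in auto)
    also have "\<dots> = k" using uv by (metis distrib_right mult_1)
    finally show "\<alpha> * fst (u *\<^sub>R x + v *\<^sub>R y) + \<beta> * snd (u *\<^sub>R x + v *\<^sub>R y) \<le> k" .
  qed
  have "convex hull V \<subseteq> {p. \<alpha> * fst p + \<beta> * snd p \<le> k}"
    using assms(1) by (intro hull_minimal cv) auto
  then show ?thesis using assms(2) by auto
qed

definition cr :: "real\<times>real \<Rightarrow> real\<times>real \<Rightarrow> real\<times>real \<Rightarrow> real" where
  "cr r p q = (fst p - fst r) * (snd q - snd r) - (snd p - snd r) * (fst q - fst r)"

lemma in_tri:
  assumes D: "cr P1 P2 P3 > 0" and "cr p P2 P3 \<ge> 0" "cr P1 p P3 \<ge> 0" "cr P1 P2 p \<ge> 0"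
  shows "p \<in> convex hull {P1, P2, P3}"
proof -
  define Dd where "Dd = cr P1 P2 P3"
  define u where "u = cr p P2 P3 / Dd"
  define v where "v = cr P1 p P3 / Dd"
  define w where "w = cr P1 P2 p / Dd"
  have Dd0: "Dd \<noteq> 0" using D Dd_def by auto
  have sum: "cr p P2 P3 + cr P1 p P3 + cr P1 P2 p = Dd"
    unfolding Dd_def cr_def by (simp add: algebra_simps)
  have c1: "cr p P2 P3 * fst P1 + cr P1 p P3 * fst P2 + cr P1 P2 p * fst P3 = Dd * fst p"
    unfolding Dd_def cr_def by (simp add: algebra_simps)
  have c2: "cr p P2 P3 * snd P1 + cr P1 p P3 * snd P2 + cr P1 P2 p * snd P3 = Dd * snd p"
    unfolding Dd_def cr_def by (simp add: algebra_simps)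
  have "u + v + w = 1" unfolding u_def v_def w_def using sum Dd0
    by (simp add: add_divide_distrib[symmetric])
  moreover have "p = u *\<^sub>R P1 + v *\<^sub>R P2 + w *\<^sub>R P3"
  proof (rule prod_eqI)
    show "fst p = fst (u *\<^sub>R P1 + v *\<^sub>R P2 + w *\<^sub>R P3)"
      using c1 Dd0 unfolding u_def v_def w_def by (simp add: field_simps)
    show "snd p = snd (u *\<^sub>R P1 + v *\<^sub>R P2 + w *\<^sub>R P3)"
      using c2 Dd0 unfolding u_def v_def w_def by (simp add: field_simps)
  qed
  moreover have "0 \<le> u" "0 \<le> v" "0 \<le> w" using assms unfolding u_def v_def w_def Dd_def by auto
  ultimately show ?thesis unfolding convex_hull_3 by blast
qed


lemma ml: "(u::int) \<le> u2 \<Longrightarrow> v \<le> v2 \<Longrightarrow> 0 \<le> u \<Longrightarrow> 0 \<le> v2 \<Longrightarrow> u * v \<le> u2 * v2"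
  by (meson mult_left_mono mult_right_mono order_trans)

definition prm :: "int \<Rightarrow> int \<Rightarrow> int \<Rightarrow> int \<Rightarrow> int \<Rightarrow> bool" where
  "prm h a b c d \<longleftrightarrow> 2 \<le> h \<and> 1 \<le> a \<and> a \<le> h-1 \<and> 1 \<le> b \<and> b \<le> h-1
     \<and> 1 \<le> c \<and> c \<le> h-1 \<and> 1 \<le> d \<and> d \<le> h-1"

lemma Q_ineq:
  assumes P: "prm h a b c d" and p: "p \<in> quadQ h a b c d"
  defines "x \<equiv> fst p" and "y \<equiv> snd p"
  shows "0 \<le> x" "x \<le> of_int h" "0 \<le> y" "y \<le> of_int h"
    "of_int (min a b) \<le> x + y" "x + y \<le> 2 * of_int h - of_int (min c d)"
    "x - y \<le> of_int (max a c)" "y - x \<le> of_int (max b d)"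
    "of_int a * of_int b \<le> of_int b * x + of_int a * y"
    "of_int (h-d) * y - of_int (h-b) * x \<le> of_int ((h-d) * b)"
    "of_int c * x + of_int d * y \<le> of_int (c * (h-d)+d * h)"
    "of_int (h-c) * x - of_int (h-a) * y \<le> of_int ((h-c) * a)"
proof -
  note pp = p[unfolded quadQ_def]
  have h: "2 \<le> h" "1 \<le> a" "a \<le> h-1" "1 \<le> b" "b \<le> h-1" "1 \<le> c" "c \<le> h-1" "1 \<le> d" "d \<le> h-1"
    using P unfolding prm_def by auto
  show "0 \<le> x" using hull_lin[OF _ pp, of "-1" 0 0] h unfolding x_def by auto
  show "x \<le> of_int h" using hull_lin[OF _ pp, of "1" 0 "of_int h"] h unfolding x_def by auto
  show "0 \<le> y" using hull_lin[OF _ pp, of 0 "-1" 0] h unfolding y_def by auto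
  show "y \<le> of_int h" using hull_lin[OF _ pp, of 0 1 "of_int h"] h unfolding y_def by auto
  show "of_int (min a b) \<le> x + y" using hull_lin[OF _ pp, of "-1" "-1" "- of_int (min a b)"] h
    unfolding x_def y_def by (auto simp: min_def)
  show "x + y \<le> 2 * of_int h - of_int (min c d)" using hull_lin[OF _ pp, of "1" "1" "2 * of_int h - of_int (min c d)"] h
    unfolding x_def y_def by (auto simp: min_def)
  show "x - y \<le> of_int (max a c)" using hull_lin[OF _ pp, of "1" "-1" "of_int (max a c)"] h
    unfolding x_def y_def by (auto simp: max_def)
  show "y - x \<le> of_int (max b d)" using hull_lin[OF _ pp, of "-1" "1" "of_int (max b d)"] h
    unfolding x_def y_def by (auto simp: max_def)
  show "of_int a * of_int b \<le> of_int b * x + of_int a * y"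
  proof -
    have "b * a \<le> b * h" "0 \<le> a * (h-c)" "0 \<le> b * (h-d)" "0 \<le> a * (h-b)" using h
      by (simp_all add: mult_left_mono)
    then have i1: "a * b \<le> b * h + a * (h-c)" "a * b \<le> b * (h-d) + a * h" by (simp_all add: algebra_simps)
    have i1': "real_of_int (a * b) \<le> of_int (b * h + a * (h-c))" "real_of_int (a * b) \<le> of_int (b * (h-d) + a * h)"
      using i1 by (simp_all only: of_int_le_iff)
    have "\<forall>v\<in>{(real_of_int a, 0::real), (0, real_of_int b), (real_of_int h, real_of_int (h - c)),
          (real_of_int (h - d), real_of_int h)}. (- of_int b) * fst v + (- of_int a) * snd v \<le> - (of_int a * of_int b)"
      using i1' by (auto simp: algebra_simps)
    from hull_lin[OF this pp] show ?thesis unfolding x_def y_def by (simp add: algebra_simps)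
  qed
  show "of_int (h-d) * y - of_int (h-b) * x \<le> of_int ((h-d) * b)"
  proof -
    have "(h-d) * (h-c-b) \<le> h * (h-b)" using h by (intro ml) auto
    then have i1: "(h-d) * (h-c) - (h-b) * h \<le> (h-d) * b" by (simp add: algebra_simps)
    have "0 \<le> (h-b) * a" "0 \<le> (h-d) * b" using h by simp_all
    then have i2: "- ((h-b) * a) \<le> (h-d) * b" by linarith
    have i1': "real_of_int ((h-d) * (h-c) - (h-b) * h) \<le> of_int ((h-d) * b)" "real_of_int (- ((h-b) * a)) \<le> of_int ((h-d) * b)"
      using i1 i2 by (simp_all only: of_int_le_iff)
    have "\<forall>v\<in>{(real_of_int a, 0::real), (0, real_of_int b), (real_of_int h, real_of_int (h - c)),
          (real_of_int (h - d), real_of_int h)}. (- of_int (h-b)) * fst v + (of_int (h-d)) * snd v \<le> of_int ((h-d) * b)"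
      using i1' by (auto simp: algebra_simps)
    from hull_lin[OF this pp] show ?thesis unfolding x_def y_def by (simp add: algebra_simps)
  qed
  show "of_int c * x + of_int d * y \<le> of_int (c * (h-d)+d * h)"
  proof -
    have "c * (a+d-h) \<le> h * d" "d * b \<le> d * h" "0 \<le> c * (h-d)" using h by (auto intro!: ml mult_left_mono)
    then have i1: "c * a \<le> c * (h-d)+d * h" "d * b \<le> c * (h-d)+d * h" by (simp_all add: algebra_simps)
    have i1': "real_of_int (c * a) \<le> of_int (c * (h-d)+d * h)" "real_of_int (d * b) \<le> of_int (c * (h-d)+d * h)"
      using i1 by (simp_all only: of_int_le_iff)
    have "\<forall>v\<in>{(real_of_int a, 0::real), (0, real_of_int b), (real_of_int h, real_of_int (h - c)),
          (real_of_int (h - d), real_of_int h)}. (of_int c) * fst v + (of_int d) * snd v \<le> of_int (c * (h-d)+d * h)"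
      using i1' by (auto simp: algebra_simps)
    from hull_lin[OF this pp] show ?thesis unfolding x_def y_def by (simp add: algebra_simps)
  qed
  show "of_int (h-c) * x - of_int (h-a) * y \<le> of_int ((h-c) * a)"
  proof -
    have "(h-c) * (h-d-a) \<le> h * (h-a)" using h by (intro ml) auto
    then have i1: "(h-c) * (h-d) - (h-a) * h \<le> (h-c) * a" by (simp add: algebra_simps)
    have "0 \<le> (h-a) * b" "0 \<le> (h-c) * a" using h by simp_all
    then have i2: "- ((h-a) * b) \<le> (h-c) * a" by linarith
    have i1': "real_of_int ((h-c) * (h-d) - (h-a) * h) \<le> of_int ((h-c) * a)" "real_of_int (- ((h-a) * b)) \<le> of_int ((h-c) * a)"
      using i1 i2 by (simp_all only: of_int_le_iff)
    have "\<forall>v\<in>{(real_of_int a, 0::real), (0, real_of_int b), (real_of_int h, real_of_int (h - c)),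
          (real_of_int (h - d), real_of_int h)}. (of_int (h-c)) * fst v + (- of_int (h-a)) * snd v \<le> of_int ((h-c) * a)"
      using i1' by (auto simp: algebra_simps)
    from hull_lin[OF this pp] show ?thesis unfolding x_def y_def by (simp add: algebra_simps)
  qed
qed


lemma Q_mem:
  assumes P: "prm h a b c d"
    and EAB: "of_int a * of_int b \<le> of_int b * x + of_int a * y"
    and EBD: "of_int (h-d) * y - of_int (h-b) * x \<le> of_int ((h-d) * b)"
    and EDC: "of_int c * x + of_int d * y \<le> of_int (c * (h-d)+d * h)"
    and ECA: "of_int (h-c) * x - of_int (h-a) * y \<le> of_int ((h-c) * a)"
  shows "(x, y) \<in> quadQ h a b c d"
proof -
  have h: "2 \<le> h" "1 \<le> a" "a \<le> h-1" "1 \<le> b" "b \<le> h-1" "1 \<le> c" "c \<le> h-1" "1 \<le> d" "d \<le> h-1"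
    using P unfolding prm_def by auto
  define A where "A = (real_of_int a, 0::real)"
  define B where "B = (0::real, real_of_int b)"
  define C where "C = (real_of_int h, real_of_int (h - c))"
  define D where "D = (real_of_int (h - d), real_of_int h)"
  have Qe: "quadQ h a b c d = convex hull {A, B, C, D}"
    unfolding quadQ_def A_def B_def C_def D_def by simp
  show ?thesis
  proof (cases "cr A D (x,y) \<ge> 0")
    case True
    have "0 < a * (h-b) + b * (h-d)" using h by (simp add: add_pos_pos)
    then have i: "0 < (h-d-a) * b + h * a" by (simp add: algebra_simps)
    have "0 < real_of_int ((h-d-a) * b + h * a)" using i by (simp only: of_int_0_less_iff)
    then have "cr A D B > 0" unfolding cr_def A_def B_def D_def by (simp add: algebra_simps)
    moreover have "cr (x,y) D B \<ge> 0" using EBD unfolding cr_def B_def D_def by (simp add: algebra_simps)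
    moreover have "cr A (x,y) B \<ge> 0" using EAB unfolding cr_def A_def B_def by (simp add: algebra_simps)
    ultimately have "(x,y) \<in> convex hull {A, D, B}" using True by (intro in_tri) auto
    also have "\<dots> \<subseteq> convex hull {A, B, C, D}" by (intro hull_mono) auto
    finally show ?thesis using Qe by simp
  next
    case False
    have "(h-c) * (h-d-a) \<le> (h-c) * (h-a)" using h by (intro mult_left_mono) auto
    also have "\<dots> < h * (h-a)" using h by (intro mult_strict_right_mono) auto
    finally have i: "0 < (h-a) * h - (h-c) * (h-d-a)" by (simp add: mult.commute)
    have "0 < real_of_int ((h-a) * h - (h-c) * (h-d-a))" using i by (simp only: of_int_0_less_iff)
    then have "cr A C D > 0" unfolding cr_def A_def C_def D_def by (simp add: algebra_simps)
    moreover have "cr (x,y) C D \<ge> 0" using EDC unfolding cr_def C_def D_def by (simp add: algebra_simps)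
    moreover have "cr A C (x,y) \<ge> 0" using ECA unfolding cr_def A_def C_def by (simp add: algebra_simps)
    moreover have "cr A (x,y) D \<ge> 0" using False unfolding cr_def A_def D_def by (simp add: algebra_simps)
    ultimately have "(x,y) \<in> convex hull {A, C, D}" by (intro in_tri) auto
    also have "\<dots> \<subseteq> convex hull {A, B, C, D}" by (intro hull_mono) auto
    finally show ?thesis using Qe by simp
  qed
qed


lemma dom_big:
  fixes p q k e h :: int
  assumes "2 \<le> h" "k = h \<or> k = h-1" "\<bar>e\<bar> \<le> h-2" "\<bar>q\<bar> < \<bar>p\<bar>"
  shows "h \<le> \<bar>p * k+q * e\<bar> \<or> (q = 0 \<and> \<bar>p\<bar> = 1 \<and> k = h-1)"
proof -
  have k0: "0 \<le> k" using assms(1,2) by linarith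
  have t: "\<bar>p\<bar> * k - \<bar>q\<bar> * \<bar>e\<bar> \<le> \<bar>p * k+q * e\<bar>"
  proof -
    have "\<bar>p * k\<bar> - \<bar>-(q * e)\<bar> \<le> \<bar>p * k - -(q * e)\<bar>" by (rule abs_triangle_ineq2)
    then show ?thesis using k0 by (simp add: abs_mult)
  qed
  show ?thesis
  proof (cases "q = 0")
    case True
    show ?thesis
    proof (cases "\<bar>p\<bar> = 1 \<and> k = h-1")
      case True
      then show ?thesis using \<open>q = 0\<close> by simp
    next
      case False
      have "h \<le> \<bar>p\<bar> * k"
      proof (cases "\<bar>p\<bar> = 1")
        case True
        then have "k = h" using False assms(2) by simp
        then show ?thesis using True by simp
      next
        case False
        then have "2 \<le> \<bar>p\<bar>" using assms(4) \<open>q = 0\<close> by linarith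
        then have "2 * (h-1) \<le> \<bar>p\<bar> * k" using assms(1,2) by (intro mult_mono) linarith+
        moreover have "h \<le> 2 * (h-1)" using assms(1) by simp
        ultimately show ?thesis by (rule order_trans[rotated])
      qed
      then show ?thesis using t \<open>q = 0\<close> by simp
    qed
  next
    case False
    then have q1: "1 \<le> \<bar>q\<bar>" by linarith
    have "(\<bar>q\<bar>+1) * (h-1) \<le> \<bar>p\<bar> * k" using assms by (intro mult_mono) linarith+
    moreover have "\<bar>q\<bar> * \<bar>e\<bar> \<le> \<bar>q\<bar> * (h-2)" using assms by (intro mult_left_mono) linarith+
    ultimately have "(\<bar>q\<bar>+1) * (h-1) - \<bar>q\<bar> * (h-2) \<le> \<bar>p * k+q * e\<bar>" using t by linarith
    moreover have "(\<bar>q\<bar>+1) * (h-1) - \<bar>q\<bar> * (h-2) = h - 1 + \<bar>q\<bar>" by (simp add: algebra_simps)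
    ultimately show ?thesis using q1 by linarith
  qed
qed

lemma row_big:
  fixes p q k1 e1 k2 e2 h :: int
  assumes "2 \<le> h" "k1 = h \<or> k1 = h-1" "k2 = h \<or> k2 = h-1" "\<bar>e1\<bar> \<le> h-2" "\<bar>e2\<bar> \<le> h-2"
  shows "h \<le> \<bar>p * k1+q * e1\<bar> \<or> h \<le> \<bar>p * e2+q * k2\<bar> \<or> \<bar>p\<bar> = \<bar>q\<bar>
     \<or> (q=0 \<and> \<bar>p\<bar>=1 \<and> k1=h-1) \<or> (p=0 \<and> \<bar>q\<bar>=1 \<and> k2=h-1)"
proof -
  consider "\<bar>q\<bar> < \<bar>p\<bar>" | "\<bar>p\<bar> < \<bar>q\<bar>" | "\<bar>p\<bar> = \<bar>q\<bar>" by linarith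
  then show ?thesis
  proof cases
    case 1 then show ?thesis using dom_big[OF assms(1,2,4) 1] by auto
  next
    case 2 then show ?thesis using dom_big[OF assms(1,3,5) 2] by (auto simp: add.commute)
  qed auto
qed

lemma diag_big:
  fixes p q sx sy tx ty h :: int
  assumes "\<bar>p\<bar> = \<bar>q\<bar>" "p \<noteq> 0" "h \<le> sx+sy" "h \<le> tx-ty" "0 \<le> h"
  shows "h \<le> \<bar>p * sx+q * sy\<bar> \<or> h \<le> \<bar>p * tx+q * ty\<bar>"
proof -
  have p1: "1 \<le> \<bar>p\<bar>" using assms by auto
  have "q = p \<or> q = -p" using assms by (auto simp: abs_eq_iff)
  then show ?thesis
  proof
    assume "q = p"
    then have "\<bar>p * sx+q * sy\<bar> = \<bar>p\<bar> * \<bar>sx+sy\<bar>" by (simp add: abs_mult[symmetric] distrib_left)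
    moreover have "1 * h \<le> \<bar>p\<bar> * \<bar>sx+sy\<bar>" using p1 assms by (intro mult_mono) auto
    ultimately show ?thesis by simp
  next
    assume "q = -p"
    then have "\<bar>p * tx+q * ty\<bar> = \<bar>p\<bar> * \<bar>tx-ty\<bar>" by (simp add: abs_mult[symmetric] right_diff_distrib)
    moreover have "1 * h \<le> \<bar>p\<bar> * \<bar>tx-ty\<bar>" using p1 assms by (intro mult_mono) auto
    ultimately show ?thesis by simp
  qed
qed

lemma diag_det_even:
  fixes a11 a12 a21 a22 :: int
  assumes "\<bar>a11\<bar> = \<bar>a12\<bar>" "\<bar>a21\<bar> = \<bar>a22\<bar>"
  shows "even (a11 * a22 - a12 * a21)"
proof -
  have A: "a12 = a11 \<or> a12 = -a11" "a22 = a21 \<or> a22 = -a21" using assms by (auto simp: abs_eq_iff)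
  have "\<exists>m. a11 * a22 - a12 * a21 = 2 * m"
    using A
  proof (elim disjE)
    assume "a12 = a11" "a22 = a21" then show ?thesis by (intro exI[of _ 0]) simp
  next
    assume "a12 = a11" "a22 = -a21" then show ?thesis by (intro exI[of _ "-(a11 * a21)"]) simp
  next
    assume "a12 = -a11" "a22 = a21" then show ?thesis by (intro exI[of _ "a11 * a21"]) simp
  next
    assume "a12 = -a11" "a22 = -a21" then show ?thesis by (intro exI[of _ 0]) simp
  qed
  then show ?thesis by (metis dvd_triv_left)
qed

definition bigrow :: "int \<Rightarrow> int \<Rightarrow> int \<Rightarrow> int \<Rightarrow> int \<Rightarrow> int \<Rightarrow> int \<Rightarrow> int \<Rightarrow> int \<Rightarrow> int \<Rightarrow> int \<Rightarrow> bool" where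
  "bigrow h k1 e1 k2 e2 sx sy tx ty p q \<longleftrightarrow> h \<le> \<bar>p * k1+q * e1\<bar> \<or> h \<le> \<bar>p * e2+q * k2\<bar>
      \<or> ((k1 = h-1 \<or> k2 = h-1) \<and> (h \<le> \<bar>p * sx+q * sy\<bar> \<or> h \<le> \<bar>p * tx+q * ty\<bar>))"

lemma two_rows:
  fixes a11 a12 a21 a22 k1 e1 k2 e2 h sx sy tx ty :: int
  assumes h: "2 \<le> h" and k: "k1 = h \<or> k1 = h-1" "k2 = h \<or> k2 = h-1" "k1 = h \<or> k2 = h"
    and e: "\<bar>e1\<bar> \<le> h-2" "\<bar>e2\<bar> \<le> h-2"
    and DD: "k1 = h-1 \<or> k2 = h-1 \<Longrightarrow> h \<le> sx+sy \<and> h \<le> tx-ty"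
    and det: "a11 * a22 - a12 * a21 = 1 \<or> a11 * a22 - a12 * a21 = -1"
  shows "bigrow h k1 e1 k2 e2 sx sy tx ty a11 a12 \<or> bigrow h k1 e1 k2 e2 sx sy tx ty a21 a22"
proof (rule ccontr)
  assume nb: "\<not> ?thesis"
  have nb1: "\<not> bigrow h k1 e1 k2 e2 sx sy tx ty a11 a12" and nb2: "\<not> bigrow h k1 e1 k2 e2 sx sy tx ty a21 a22"
    using nb by auto
  have odd: "odd (a11 * a22 - a12 * a21)" using det by (metis even_minus odd_one)
  have r1: "\<bar>a11\<bar> = \<bar>a12\<bar> \<or> (a12=0 \<and> \<bar>a11\<bar>=1 \<and> k1=h-1) \<or> (a11=0 \<and> \<bar>a12\<bar>=1 \<and> k2=h-1)"
    using row_big[OF h k(1,2) e, of a11 a12] nb1 unfolding bigrow_def by blast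
  have r2: "\<bar>a21\<bar> = \<bar>a22\<bar> \<or> (a22=0 \<and> \<bar>a21\<bar>=1 \<and> k1=h-1) \<or> (a21=0 \<and> \<bar>a22\<bar>=1 \<and> k2=h-1)"
    using row_big[OF h k(1,2) e, of a21 a22] nb2 unfolding bigrow_def by blast
  have nz1: "a11 \<noteq> 0" if "\<bar>a11\<bar> = \<bar>a12\<bar>" using det that by auto
  have nz2: "a21 \<noteq> 0" if "\<bar>a21\<bar> = \<bar>a22\<bar>" using det that by auto
  show False
  proof (cases "\<bar>a11\<bar> = \<bar>a12\<bar>")
    case d1: True
    show False
    proof (cases "\<bar>a21\<bar> = \<bar>a22\<bar>")
      case True
      then show False using diag_det_even[OF d1 True] odd by simp
    next
      case False
      then have kc: "k1 = h-1 \<or> k2 = h-1" using r2 by blast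
      have sD: "h \<le> sx+sy" "h \<le> tx-ty" using DD kc by blast+
      have "h \<le> \<bar>a11 * sx + a12 * sy\<bar> \<or> h \<le> \<bar>a11 * tx + a12 * ty\<bar>"
        using diag_big[OF d1 nz1[OF d1] sD] h by auto
      then have "bigrow h k1 e1 k2 e2 sx sy tx ty a11 a12" unfolding bigrow_def using kc by blast
      with nb1 show False by blast
    qed
  next
    case nd1: False
    show False
    proof (cases "\<bar>a21\<bar> = \<bar>a22\<bar>")
      case d2: True
      then have kc: "k1 = h-1 \<or> k2 = h-1" using r1 nd1 by blast
      have sD: "h \<le> sx+sy" "h \<le> tx-ty" using DD kc by blast+
      have "h \<le> \<bar>a21 * sx + a22 * sy\<bar> \<or> h \<le> \<bar>a21 * tx + a22 * ty\<bar>"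
        using diag_big[OF d2 nz2[OF d2] sD] h by auto
      then have "bigrow h k1 e1 k2 e2 sx sy tx ty a21 a22" unfolding bigrow_def using kc by blast
      with nb2 show False by blast
    next
      case False
      have s1: "(a12=0 \<and> k1=h-1) \<or> (a11=0 \<and> k2=h-1)" using r1 nd1 by blast
      have s2: "(a22=0 \<and> k1=h-1) \<or> (a21=0 \<and> k2=h-1)" using r2 False by blast
      from s1 s2 show False
      proof (elim disjE conjE)
        assume "a12 = 0" "a22 = 0" then show False using det by simp
      next
        assume "k1 = h-1" "k2 = h-1" then show False using k h by linarith
      next
        assume "k2 = h-1" "k1 = h-1" then show False using k h by linarith
      next
        assume "a11 = 0" "a21 = 0" then show False using det by simp
      qed
    qed
  qed
qed

lemma LB:
  fixes S :: "(real \<times> real) set" and h k1 e1 k2 e2 x1 y1 x2 y2 :: int and l :: real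
  assumes h: "2 \<le> h" and k: "k1 = h \<or> k1 = h-1" "k2 = h \<or> k2 = h-1" "k1 = h \<or> k2 = h"
    and e: "\<bar>e1\<bar> \<le> h-2" "\<bar>e2\<bar> \<le> h-2"
    and P1: "(of_int x1, of_int y1) \<in> S" "(of_int (x1+k1), of_int (y1+e1)) \<in> S"
    and P2: "(of_int x2, of_int y2) \<in> S" "(of_int (x2+e2), of_int (y2+k2)) \<in> S"
    and DD: "k1 = h-1 \<or> k2 = h-1 \<Longrightarrow> \<exists>s1 t1 s2 t2 u1 v1 u2 v2. (of_int s1, of_int t1) \<in> S \<and> (of_int s2, of_int t2) \<in> S
       \<and> h \<le> (s2+t2)-(s1+t1) \<and> (of_int u1, of_int v1) \<in> S \<and> (of_int u2, of_int v2) \<in> S \<and> h \<le> (u2-v2)-(u1-v1)"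
    and f: "unimodular_affine f" and fS: "f ` S \<subseteq> (\<lambda>p. l *\<^sub>R p) ` unit_square" and l0: "0 \<le> l"
  shows "of_int h \<le> l"
proof -
  obtain a11 a12 a21 a22 v1 v2 :: int where
    det: "a11 * a22 - a12 * a21 = 1 \<or> a11 * a22 - a12 * a21 = -1" and
    fe: "f = (\<lambda>(x, y). (of_int a11 * x + of_int a12 * y + of_int v1, of_int a21 * x + of_int a22 * y + of_int v2))"
    using f unfolding unimodular_affine_def by blast
  have bnd: "0 \<le> fst (f s) \<and> fst (f s) \<le> l \<and> 0 \<le> snd (f s) \<and> snd (f s) \<le> l" if "s \<in> S" for s
  proof -
    from fS that obtain u where u: "u \<in> unit_square" "f s = l *\<^sub>R u" by blast
    then show ?thesis using l0 unfolding unit_square_def by (auto intro: mult_nonneg_nonneg mult_left_le)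
  qed
  have key: "of_int \<bar>a11 * (X'-X) + a12 * (Y'-Y)\<bar> \<le> l \<and> of_int \<bar>a21 * (X'-X) + a22 * (Y'-Y)\<bar> \<le> l"
    if "(of_int X, of_int Y) \<in> S" "(of_int X', of_int Y') \<in> S" for X Y X' Y'
  proof -
    have b1: "\<bar>fst (f (of_int X', of_int Y')) - fst (f (of_int X, of_int Y))\<bar> \<le> l"
      "\<bar>snd (f (of_int X', of_int Y')) - snd (f (of_int X, of_int Y))\<bar> \<le> l"
      using bnd[OF that(1)] bnd[OF that(2)] by linarith+
    have "fst (f (of_int X', of_int Y')) - fst (f (of_int X, of_int Y)) = of_int (a11 * (X'-X) + a12 * (Y'-Y))"
      "snd (f (of_int X', of_int Y')) - snd (f (of_int X, of_int Y)) = of_int (a21 * (X'-X) + a22 * (Y'-Y))"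
      unfolding fe by (simp_all add: algebra_simps)
    then show ?thesis using b1 by (simp del: of_int_add of_int_mult of_int_diff)
  qed
  have "\<exists>sx sy tx ty. (k1 = h-1 \<or> k2 = h-1) \<longrightarrow> (h \<le> sx+sy \<and> h \<le> tx-ty \<and>
      of_int \<bar>a11 * sx + a12 * sy\<bar> \<le> l \<and> of_int \<bar>a21 * sx + a22 * sy\<bar> \<le> l \<and>
      of_int \<bar>a11 * tx + a12 * ty\<bar> \<le> l \<and> of_int \<bar>a21 * tx + a22 * ty\<bar> \<le> l)"
  proof (cases "k1 = h-1 \<or> k2 = h-1")
    case True
    from DD[OF True] obtain s1 t1 s2 t2 u1 v1 u2 v2 where
      D: "(of_int s1, of_int t1) \<in> S \<and> (of_int s2, of_int t2) \<in> S \<and> h \<le> (s2+t2)-(s1+t1) \<and>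
         (of_int u1, of_int v1) \<in> S \<and> (of_int u2, of_int v2) \<in> S \<and> h \<le> (u2-v2)-(u1-v1)"
      by blast
    have D1: "(of_int s1, of_int t1) \<in> S" "(of_int s2, of_int t2) \<in> S"
      "(of_int u1, of_int v1) \<in> S" "(of_int u2, of_int v2) \<in> S" using D by blast+
    have D2: "h \<le> (s2-s1)+(t2-t1)" "h \<le> (u2-u1)-(v2-v1)" using D by linarith+
    show ?thesis
      apply (rule exI[of _ "s2-s1"], rule exI[of _ "t2-t1"], rule exI[of _ "u2-u1"], rule exI[of _ "v2-v1"])
      using key[OF D1(1,2)] key[OF D1(3,4)] D2 by blast
  qed auto
  then obtain sx sy tx ty where SX: "(k1 = h-1 \<or> k2 = h-1) \<longrightarrow> (h \<le> sx+sy \<and> h \<le> tx-ty \<and>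
      of_int \<bar>a11 * sx + a12 * sy\<bar> \<le> l \<and> of_int \<bar>a21 * sx + a22 * sy\<bar> \<le> l \<and>
      of_int \<bar>a11 * tx + a12 * ty\<bar> \<le> l \<and> of_int \<bar>a21 * tx + a22 * ty\<bar> \<le> l)" by blast
  have K1: "of_int \<bar>a11 * k1 + a12 * e1\<bar> \<le> l \<and> of_int \<bar>a21 * k1 + a22 * e1\<bar> \<le> l"
    using key[OF P1] by simp
  have K2: "of_int \<bar>a11 * e2 + a12 * k2\<bar> \<le> l \<and> of_int \<bar>a21 * e2 + a22 * k2\<bar> \<le> l"
    using key[OF P2] by simp
  have "bigrow h k1 e1 k2 e2 sx sy tx ty a11 a12 \<or> bigrow h k1 e1 k2 e2 sx sy tx ty a21 a22"
  proof (rule two_rows[OF h k e _ det])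
    assume "k1 = h-1 \<or> k2 = h-1"
    then show "h \<le> sx+sy \<and> h \<le> tx-ty" using SX by blast
  qed
  then have "\<exists>z. h \<le> z \<and> of_int z \<le> l"
  proof
    assume "bigrow h k1 e1 k2 e2 sx sy tx ty a11 a12"
    then consider "h \<le> \<bar>a11 * k1 + a12 * e1\<bar>" | "h \<le> \<bar>a11 * e2 + a12 * k2\<bar>"
      | "k1 = h-1 \<or> k2 = h-1" "h \<le> \<bar>a11 * sx + a12 * sy\<bar>"
      | "k1 = h-1 \<or> k2 = h-1" "h \<le> \<bar>a11 * tx + a12 * ty\<bar>"
      unfolding bigrow_def by argo
    then show ?thesis
    proof cases
      case 1 then show ?thesis using K1 by blast
    next
      case 2 then show ?thesis using K2 by blast
    next
      case 3 then show ?thesis using SX by blast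
    next
      case 4 then show ?thesis using SX by blast
    qed
  next
    assume "bigrow h k1 e1 k2 e2 sx sy tx ty a21 a22"
    then consider "h \<le> \<bar>a21 * k1 + a22 * e1\<bar>" | "h \<le> \<bar>a21 * e2 + a22 * k2\<bar>"
      | "k1 = h-1 \<or> k2 = h-1" "h \<le> \<bar>a21 * sx + a22 * sy\<bar>"
      | "k1 = h-1 \<or> k2 = h-1" "h \<le> \<bar>a21 * tx + a22 * ty\<bar>"
      unfolding bigrow_def by argo
    then show ?thesis
    proof cases
      case 1 then show ?thesis using K1 by blast
    next
      case 2 then show ?thesis using K2 by blast
    next
      case 3 then show ?thesis using SX by blast
    next
      case 4 then show ?thesis using SX by blast
    qed
  qed
  then obtain z where z: "h \<le> z" "of_int z \<le> l" by blast
  then show ?thesis by (meson of_int_le_iff order_trans)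
qed


lemma ls_le:
  assumes "unimodular_affine f" "f ` S \<subseteq> (\<lambda>p. l *\<^sub>R p) ` unit_square" "0 \<le> l"
  shows "ls_square S \<le> l"
  unfolding ls_square_def
  by (rule cInf_lower) (use assms in \<open>auto intro: bdd_belowI[of _ 0]\<close>)

lemma ls_ge:
  assumes "unimodular_affine f0" "f0 ` S \<subseteq> (\<lambda>p. l0 *\<^sub>R p) ` unit_square" "0 \<le> l0"
    and "\<And>f l. unimodular_affine f \<Longrightarrow> f ` S \<subseteq> (\<lambda>p. l *\<^sub>R p) ` unit_square \<Longrightarrow> 0 \<le> l \<Longrightarrow> m \<le> l"
  shows "m \<le> ls_square S"
  unfolding ls_square_def
  by (rule cInf_greatest) (use assms in auto)

lemma box_ex:
  fixes pA pB pC pD tA tB :: int and L :: real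
  assumes det: "pA * pD - pB * pC = 1 \<or> pA * pD - pB * pC = -1" and L: "0 < L"
    and B: "\<And>p. p \<in> S \<Longrightarrow> 0 \<le> of_int pA * fst p + of_int pB * snd p + of_int tA
      \<and> of_int pA * fst p + of_int pB * snd p + of_int tA \<le> L
      \<and> 0 \<le> of_int pC * fst p + of_int pD * snd p + of_int tB
      \<and> of_int pC * fst p + of_int pD * snd p + of_int tB \<le> L"
  shows "\<exists>f. unimodular_affine f \<and> f ` S \<subseteq> (\<lambda>p. L *\<^sub>R p) ` unit_square"
proof -
  define f :: "real \<times> real \<Rightarrow> real \<times> real" where
    "f = (\<lambda>(x, y). (of_int pA * x + of_int pB * y + of_int tA, of_int pC * x + of_int pD * y + of_int tB))"
  have uf: "unimodular_affine f" unfolding unimodular_affine_def f_def using det by blast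
  have "f ` S \<subseteq> (\<lambda>p. L *\<^sub>R p) ` unit_square"
  proof
    fix q assume "q \<in> f ` S"
    then obtain p where p: "p \<in> S" "q = f p" by blast
    have q: "q = L *\<^sub>R ((1/L) *\<^sub>R q)" using L by simp
    have "(1/L) *\<^sub>R q \<in> unit_square"
      using B[OF p(1)] L unfolding unit_square_def p(2) f_def
      by (auto simp: case_prod_beta field_simps)
    then show "q \<in> (\<lambda>p. L *\<^sub>R p) ` unit_square" using q by blast
  qed
  then show ?thesis using uf by blast
qed

lemma box_ub:
  fixes pA pB pC pD tA tB :: int and L :: real
  assumes det: "pA * pD - pB * pC = 1 \<or> pA * pD - pB * pC = -1" and L: "0 < L"
    and B: "\<And>p. p \<in> S \<Longrightarrow> 0 \<le> of_int pA * fst p + of_int pB * snd p + of_int tA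
      \<and> of_int pA * fst p + of_int pB * snd p + of_int tA \<le> L
      \<and> 0 \<le> of_int pC * fst p + of_int pD * snd p + of_int tB
      \<and> of_int pC * fst p + of_int pD * snd p + of_int tB \<le> L"
  shows "ls_square S \<le> L"
  using box_ex[OF det L B] ls_le L by (metis less_imp_le)

lemma ls_ge2:
  assumes "\<exists>f. unimodular_affine f \<and> f ` S \<subseteq> (\<lambda>p. l0 *\<^sub>R p) ` unit_square" "0 \<le> l0"
    and "\<And>f l. unimodular_affine f \<Longrightarrow> f ` S \<subseteq> (\<lambda>p. l *\<^sub>R p) ` unit_square \<Longrightarrow> 0 \<le> l \<Longrightarrow> m \<le> l"
  shows "m \<le> ls_square S"
  using assms ls_ge by metis

lemma id_box:
  assumes P: "prm h a b c d" and S: "S \<subseteq> quadQ h a b c d"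
  shows "\<exists>f. unimodular_affine f \<and> f ` S \<subseteq> (\<lambda>p. of_int h *\<^sub>R p) ` unit_square"
proof -
  have hp: "0 < (of_int h :: real)" using P unfolding prm_def by simp
  have "\<And>p. p \<in> S \<Longrightarrow> 0 \<le> fst p \<and> fst p \<le> of_int h \<and> 0 \<le> snd p \<and> snd p \<le> (of_int h::real)"
    using Q_ineq(1-4)[OF P] S by blast
  then show ?thesis by (intro box_ex[where pA=1 and pB=0 and pC=0 and pD=1 and tA=0 and tB=0] hp) auto
qed

lemma Q_vert:
  shows "(of_int a, of_int 0) \<in> quadQ h a b c d" "(of_int 0, of_int b) \<in> quadQ h a b c d"
    "(of_int h, of_int (h-c)) \<in> quadQ h a b c d" "(of_int (h-d), of_int h) \<in> quadQ h a b c d"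
  unfolding quadQ_def by (auto intro: hull_subset[THEN subsetD])

lemma Q_ls:
  assumes P: "prm h a b c d"
  shows "ls_square (quadQ h a b c d) = of_int h"
proof (rule antisym)
  have h: "2 \<le> h" "1 \<le> a" "a \<le> h-1" "1 \<le> b" "b \<le> h-1" "1 \<le> c" "c \<le> h-1" "1 \<le> d" "d \<le> h-1"
    using P unfolding prm_def by auto
  show "ls_square (quadQ h a b c d) \<le> of_int h"
    using id_box[OF P order_refl] ls_le h by (metis of_int_0_le_iff order_trans zero_le_numeral)
  show "of_int h \<le> ls_square (quadQ h a b c d)"
  proof (rule ls_ge2[OF id_box[OF P order_refl]])
    show "0 \<le> (of_int h :: real)" using h by simp
    fix f l assume f: "unimodular_affine f" "f ` quadQ h a b c d \<subseteq> (\<lambda>p. l *\<^sub>R p) ` unit_square" "0 \<le> l"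
    show "of_int h \<le> l"
    proof (rule LB[OF h(1) _ _ _ _ _ _ _ _ _ _ f, of h h "h-c-b" "h-d-a" 0 b a 0])
      show "(of_int 0, of_int b) \<in> quadQ h a b c d" by (rule Q_vert)
      show "(of_int (0 + h), of_int (b + (h - c - b))) \<in> quadQ h a b c d" using Q_vert(3) by simp
      show "(of_int a, of_int 0) \<in> quadQ h a b c d" by (rule Q_vert)
      show "(of_int (a + (h - d - a)), of_int (0 + h)) \<in> quadQ h a b c d" using Q_vert(4) by simp
      show "\<bar>h - c - b\<bar> \<le> h - 2" "\<bar>h - d - a\<bar> \<le> h - 2" using h by auto
    qed auto
  qed
qed


lemma sub_ub:
  fixes P :: "(real \<times> real) set" and h s lo :: int
  assumes h: "2 \<le> h" and s: "s = 1 \<or> s = -1"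
    and box: "\<forall>p\<in>P. 0 \<le> fst p \<and> fst p \<le> of_int h \<and> 0 \<le> snd p \<and> snd p \<le> of_int h"
    and dg: "\<forall>p\<in>P. of_int lo \<le> fst p + of_int s * snd p \<and> fst p + of_int s * snd p \<le> of_int lo + of_int h - 1"
    and ex: "(\<forall>p\<in>P. 1 \<le> fst p) \<or> (\<forall>p\<in>P. 1 \<le> snd p) \<or> (\<forall>p\<in>P. fst p \<le> of_int h - 1) \<or> (\<forall>p\<in>P. snd p \<le> of_int h - 1)"
  shows "ls_square P \<le> of_int h - 1"
proof -
  have L: "0 < (of_int h - 1 :: real)" using h by simp
  have d2: "\<And>p. p \<in> P \<Longrightarrow> 0 \<le> of_int 1 * fst p + of_int s * snd p + of_int (- lo)
      \<and> of_int 1 * fst p + of_int s * snd p + of_int (- lo) \<le> (of_int h - 1 :: real)"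
    using dg by fastforce
  from ex show ?thesis
  proof (elim disjE)
    assume e: "\<forall>p\<in>P. 1 \<le> fst p"
    show ?thesis
      by (rule box_ub[where pA=1 and pB=0 and tA="-1" and pC=1 and pD=s and tB="-lo", OF _ L])
         (use s box e d2 in fastforce)+
  next
    assume e: "\<forall>p\<in>P. 1 \<le> snd p"
    show ?thesis
      by (rule box_ub[where pA=0 and pB=1 and tA="-1" and pC=1 and pD=s and tB="-lo", OF _ L])
         (use s box e d2 in fastforce)+
  next
    assume e: "\<forall>p\<in>P. fst p \<le> of_int h - 1"
    show ?thesis
      by (rule box_ub[where pA=1 and pB=0 and tA="0" and pC=1 and pD=s and tB="-lo", OF _ L])
         (use s box e d2 in fastforce)+
  next
    assume e: "\<forall>p\<in>P. snd p \<le> of_int h - 1"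
    show ?thesis
      by (rule box_ub[where pA=0 and pB=1 and tA="0" and pC=1 and pD=s and tB="-lo", OF _ L])
         (use s box e d2 in fastforce)+
  qed
qed

lemma lat_int:
  assumes "lattice_point w"
  obtains n m :: int where "w = (of_int n, of_int m)"
proof -
  from assms obtain n where "fst w = of_int n" unfolding lattice_point_def by (auto elim: Ints_cases)
  moreover from assms obtain m where "snd w = of_int m" unfolding lattice_point_def by (auto elim: Ints_cases)
  ultimately show ?thesis using that by (metis prod.collapse)
qed

lemma lat_bounds:
  assumes P: "prm h a b c d" and w: "w \<in> quadQ h a b c d" and lp: "lattice_point w"
  shows "w \<noteq> (0, of_int b) \<Longrightarrow> 1 \<le> fst w"
    and "w \<noteq> (of_int a, 0) \<Longrightarrow> 1 \<le> snd w"
    and "w \<noteq> (of_int h, of_int (h-c)) \<Longrightarrow> fst w \<le> of_int h - 1"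
    and "w \<noteq> (of_int (h-d), of_int h) \<Longrightarrow> snd w \<le> of_int h - 1"
proof -
  have h: "2 \<le> h" "1 \<le> a" "a \<le> h-1" "1 \<le> b" "b \<le> h-1" "1 \<le> c" "c \<le> h-1" "1 \<le> d" "d \<le> h-1"
    using P unfolding prm_def by auto
  obtain n m :: int where wn: "w = (of_int n, of_int m)" using lat_int[OF lp] by blast
  note I = Q_ineq[OF P w, unfolded wn fst_conv snd_conv]
  have n0: "0 \<le> n" "n \<le> h" "0 \<le> m" "m \<le> h" using I(1-4) by simp_all
  have EAB: "a * b \<le> b * n + a * m" using I(9) by (simp only: of_int_mult[symmetric] of_int_add[symmetric] of_int_le_iff)
  have EBD: "(h-d) * m - (h-b) * n \<le> (h-d) * b"
    using I(10) by (simp only: of_int_mult[symmetric] of_int_diff[symmetric] of_int_le_iff)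
  have EDC: "c * n + d * m \<le> c * (h-d) + d * h"
    using I(11) by (simp only: of_int_mult[symmetric] of_int_add[symmetric] of_int_le_iff)
  have ECA: "(h-c) * n - (h-a) * m \<le> (h-c) * a"
    using I(12) by (simp only: of_int_mult[symmetric] of_int_diff[symmetric] of_int_le_iff)
  show "w \<noteq> (0, of_int b) \<Longrightarrow> 1 \<le> fst w"
  proof (rule ccontr)
    assume ne: "w \<noteq> (0, of_int b)" and "\<not> 1 \<le> fst w"
    then have "n = 0" using n0 wn by simp
    then have "a * b \<le> a * m" "(h-d) * m \<le> (h-d) * b" using EAB EBD by simp_all
    then have "b \<le> m" "m \<le> b" using h by (simp_all add: mult_le_cancel_left)
    then show False using ne wn \<open>n = 0\<close> by simp
  qed
  show "w \<noteq> (of_int a, 0) \<Longrightarrow> 1 \<le> snd w"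
  proof (rule ccontr)
    assume ne: "w \<noteq> (of_int a, 0)" and "\<not> 1 \<le> snd w"
    then have "m = 0" using n0 wn by simp
    then have "b * a \<le> b * n" "(h-c) * n \<le> (h-c) * a" using EAB ECA by (simp_all add: mult.commute)
    then have "a \<le> n" "n \<le> a" using h by (simp_all add: mult_le_cancel_left)
    then show False using ne wn \<open>m = 0\<close> by simp
  qed
  show "w \<noteq> (of_int h, of_int (h-c)) \<Longrightarrow> fst w \<le> of_int h - 1"
  proof (rule ccontr)
    assume ne: "w \<noteq> (of_int h, of_int (h-c))" and "\<not> fst w \<le> of_int h - 1"
    then have "n = h" using n0 wn by simp
    then have "(h-a) * (h-c) \<le> (h-a) * m" "d * m \<le> d * (h-c)" using EDC ECA by (simp_all add: algebra_simps)
    then have "h-c \<le> m" "m \<le> h-c" using h by (simp_all add: mult_le_cancel_left)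
    then show False using ne wn \<open>n = h\<close> by simp
  qed
  show "w \<noteq> (of_int (h-d), of_int h) \<Longrightarrow> snd w \<le> of_int h - 1"
  proof (rule ccontr)
    assume ne: "w \<noteq> (of_int (h-d), of_int h)" and "\<not> snd w \<le> of_int h - 1"
    then have "m = h" using n0 wn by simp
    then have "c * n \<le> c * (h-d)" "(h-b) * (h-d) \<le> (h-b) * n" using EDC EBD by (simp_all add: algebra_simps)
    then have "n \<le> h-d" "h-d \<le> n" using h by (simp_all add: mult_le_cancel_left)
    then show False using ne wn \<open>m = h\<close> by simp
  qed
qed


lemma Q_lp: "lattice_polygon (quadQ h a b c d)"
  unfolding lattice_polygon_def quadQ_def
  by (rule exI[of _ "{(of_int a, 0), (0, of_int b), (of_int h, of_int (h - c)), (of_int (h - d), of_int h)}"])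
     (auto simp: lattice_point_def)

lemma min_dir:
  assumes P: "prm h a b c d" and AB: "condA h a b c d \<or> condB h a b c d"
  shows "minimal_polygon (quadQ h a b c d)"
  unfolding minimal_polygon_def
proof (intro conjI Q_lp notI, elim exE conjE)
  have h: "2 \<le> h" "1 \<le> a" "a \<le> h-1" "1 \<le> b" "b \<le> h-1" "1 \<le> c" "c \<le> h-1" "1 \<le> d" "d \<le> h-1"
    using P unfolding prm_def by auto
  fix P' assume lp: "lattice_polygon P'" and sub: "P' \<subset> quadQ h a b c d"
    and eq: "ls_square P' = ls_square (quadQ h a b c d)"
  obtain W where W: "finite W" "W \<noteq> {}" "\<forall>v\<in>W. lattice_point v" "P' = convex hull W"
    using lp unfolding lattice_polygon_def by blast
  define A where "A = (real_of_int a, 0::real)"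
  define B where "B = (0::real, real_of_int b)"
  define C where "C = (real_of_int h, real_of_int (h - c))"
  define D where "D = (real_of_int (h - d), real_of_int h)"
  have Qe: "quadQ h a b c d = convex hull {A, B, C, D}"
    unfolding quadQ_def A_def B_def C_def D_def by simp
  have notall: "\<not> {A, B, C, D} \<subseteq> P'"
  proof
    assume "{A, B, C, D} \<subseteq> P'"
    then have "quadQ h a b c d \<subseteq> P'" unfolding Qe W(4) by (intro hull_minimal convex_convex_hull)
    then show False using sub by blast
  qed
  have WP: "W \<subseteq> P'" unfolding W(4) by (rule hull_subset)
  have PQ: "\<forall>p\<in>P'. p \<in> quadQ h a b c d" using psubset_imp_subset[OF sub] by blast
  have WQ: "w \<in> quadQ h a b c d" if "w \<in> W" for w
    using that WP PQ by blast
  have ex: "(\<forall>p\<in>P'. 1 \<le> fst p) \<or> (\<forall>p\<in>P'. 1 \<le> snd p) \<or> (\<forall>p\<in>P'. fst p \<le> of_int h - 1) \<or> (\<forall>p\<in>P'. snd p \<le> of_int h - 1)"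
  proof -
    have lem: "\<forall>p\<in>P'. \<alpha> * fst p + \<beta> * snd p \<le> k" if "\<forall>w\<in>W. \<alpha> * fst w + \<beta> * snd w \<le> k" for \<alpha> \<beta> k
    proof
      fix p assume "p \<in> P'"
      then have "p \<in> convex hull W" using W(4) by simp
      from hull_lin[OF that this] show "\<alpha> * fst p + \<beta> * snd p \<le> k" .
    qed
    have nn: "\<not> (A \<in> P' \<and> B \<in> P' \<and> C \<in> P' \<and> D \<in> P')" using notall by simp
    consider "B \<notin> P'" | "A \<notin> P'" | "C \<notin> P'" | "D \<notin> P'" using nn by blast
    then show ?thesis
    proof cases
      case 1
      have "\<forall>w\<in>W. 1 \<le> fst w"
      proof
        fix w assume w: "w \<in> W"
        then have "w \<noteq> B" using \<open>B \<notin> P'\<close> WP by blast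
        then show "1 \<le> fst w" using lat_bounds(1)[OF P WQ[OF w]] W(3) w unfolding B_def by blast
      qed
      then have "\<forall>p\<in>P'. (-1) * fst p + 0 * snd p \<le> -1" using lem[of "-1" 0 "-1"] by simp
      then show ?thesis by simp
    next
      case 2
      have "\<forall>w\<in>W. 1 \<le> snd w"
      proof
        fix w assume w: "w \<in> W"
        then have "w \<noteq> A" using \<open>A \<notin> P'\<close> WP by blast
        then show "1 \<le> snd w" using lat_bounds(2)[OF P WQ[OF w]] W(3) w unfolding A_def by blast
      qed
      then have "\<forall>p\<in>P'. 0 * fst p + (-1) * snd p \<le> -1" using lem[of 0 "-1" "-1"] by simp
      then show ?thesis by simp
    next
      case 3
      have "\<forall>w\<in>W. fst w \<le> of_int h - 1"
      proof
        fix w assume w: "w \<in> W"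
        then have "w \<noteq> C" using \<open>C \<notin> P'\<close> WP by blast
        then show "fst w \<le> of_int h - 1" using lat_bounds(3)[OF P WQ[OF w]] W(3) w unfolding C_def by blast
      qed
      then have "\<forall>p\<in>P'. 1 * fst p + 0 * snd p \<le> of_int h - 1" using lem[of 1 0 "of_int h - 1"] by simp
      then show ?thesis by simp
    next
      case 4
      have "\<forall>w\<in>W. snd w \<le> of_int h - 1"
      proof
        fix w assume w: "w \<in> W"
        then have "w \<noteq> D" using \<open>D \<notin> P'\<close> WP by blast
        then show "snd w \<le> of_int h - 1" using lat_bounds(4)[OF P WQ[OF w]] W(3) w unfolding D_def by blast
      qed
      then have "\<forall>p\<in>P'. 0 * fst p + 1 * snd p \<le> of_int h - 1" using lem[of 0 1 "of_int h - 1"] by simp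
      then show ?thesis by simp
    qed
  qed
  have box: "\<forall>p\<in>P'. 0 \<le> fst p \<and> fst p \<le> of_int h \<and> 0 \<le> snd p \<and> snd p \<le> of_int h"
    using Q_ineq(1-4)[OF P] PQ by blast
  have "ls_square P' \<le> of_int h - 1"
    using AB
  proof
    assume cA: "condA h a b c d"
    have "min a b + min c d \<ge> h + 1" using cA unfolding condA_def by simp
    then have cA': "2 * real_of_int h - of_int (min c d) \<le> of_int (min a b) + of_int h - 1" by linarith
    show ?thesis
    proof (rule sub_ub[OF h(1) _ box _ ex, of 1 "min a b"])
      show "\<forall>p\<in>P'. of_int (min a b) \<le> fst p + of_int 1 * snd p \<and> fst p + of_int 1 * snd p \<le> of_int (min a b) + of_int h - 1"
      proof
        fix p assume "p \<in> P'"
        then have pq: "p \<in> quadQ h a b c d" using PQ by blast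
        show "of_int (min a b) \<le> fst p + of_int 1 * snd p \<and> fst p + of_int 1 * snd p \<le> of_int (min a b) + of_int h - 1"
          using Q_ineq(5,6)[OF P pq] cA' by simp
      qed
    qed simp
  next
    assume cB: "condB h a b c d"
    have "max a c + max b d \<le> h - 1" using cB unfolding condB_def by simp
    then have cB': "real_of_int (max a c) \<le> of_int (- max b d) + of_int h - 1" by linarith
    show ?thesis
    proof (rule sub_ub[OF h(1) _ box _ ex, of "-1" "- max b d"])
      show "\<forall>p\<in>P'. of_int (- max b d) \<le> fst p + of_int (-1) * snd p \<and> fst p + of_int (-1) * snd p \<le> of_int (- max b d) + of_int h - 1"
      proof
        fix p assume "p \<in> P'"
        then have pq: "p \<in> quadQ h a b c d" using PQ by blast
        show "of_int (- max b d) \<le> fst p + of_int (-1) * snd p \<and> fst p + of_int (-1) * snd p \<le> of_int (- max b d) + of_int h - 1"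
          using Q_ineq(7,8)[OF P pq] cB' by simp
      qed
    qed simp
  qed
  then show False using eq Q_ls[OF P] by simp
qed


lemma reflect_equiv:
  "lattice_equivalent (quadQ h a b c d) (quadQ h (h-d) (h-b) (h-c) (h-a))"
proof -
  define f :: "real \<times> real \<Rightarrow> real \<times> real" where
    "f = (\<lambda>(x, y). (of_int 1 * x + of_int 0 * y + of_int 0, of_int 0 * x + of_int (-1) * y + of_int h))"
  have uf: "unimodular_affine f" unfolding unimodular_affine_def f_def
    by (rule exI[of _ 1], rule exI[of _ 0], rule exI[of _ 0], rule exI[of _ "-1"], rule exI[of _ 0], rule exI[of _ h]) simp
  define L :: "real \<times> real \<Rightarrow> real \<times> real" where "L = (\<lambda>p. (fst p, - snd p))"
  have lin: "linear L" unfolding L_def by (intro linearI) (auto simp: algebra_simps)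
  have fe: "f = (\<lambda>p. (0, of_int h) + p) \<circ> L" unfolding f_def L_def by (auto simp: fun_eq_iff)
  have img: "f ` (convex hull V) = convex hull (f ` V)" for V
    unfolding fe image_comp[symmetric] convex_hull_linear_image[OF lin]
    by (simp add: convex_hull_translation)
  have V: "f ` {(of_int a, 0), (0, of_int b), (of_int h, of_int (h - c)), (of_int (h - d), of_int h)}
     = {(of_int (h-d), 0), (0, of_int (h-b)), (of_int h, of_int (h - (h-c))), (of_int (h - (h-a)), of_int h)}"
    unfolding f_def by auto
  show ?thesis unfolding lattice_equivalent_def quadQ_def
    using uf img V by metis
qed

lemma not_both: "\<not> (condA h a b c d \<and> condB h a b c d)"
  unfolding condA_def condB_def by linarith

lemma reflect_cond:
  "condA h a b c d \<Longrightarrow> condB h (h-d) (h-b) (h-c) (h-a)"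
  "condB h a b c d \<Longrightarrow> condA h (h-d) (h-b) (h-c) (h-a)"
  unfolding condA_def condB_def by (auto simp: min_def max_def)


lemma Q_mem_int:
  assumes P: "prm h a b c d" and i: "a * b \<le> b * n + a * m" "(h-d) * m - (h-b) * n \<le> (h-d) * b"
    "c * n + d * m \<le> c * (h-d) + d * h" "(h-c) * n - (h-a) * m \<le> (h-c) * a"
  shows "(of_int n, of_int m) \<in> quadQ h a b c d"
  by (rule Q_mem[OF P]) (use i in \<open>simp only: of_int_mult[symmetric] of_int_add[symmetric] of_int_diff[symmetric] of_int_le_iff\<close>)+

lemma DD_help:
  fixes T :: "(int \<times> int) set" and S :: "(real \<times> real) set"
  assumes "\<forall>p\<in>T. (of_int (fst p), of_int (snd p)) \<in> S"
    "\<exists>s\<in>T. \<exists>t\<in>T. h \<le> (fst t + snd t) - (fst s + snd s)"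
    "\<exists>u\<in>T. \<exists>v\<in>T. h \<le> (fst v - snd v) - (fst u - snd u)"
  shows "\<exists>s1 t1 s2 t2 u1 v1 u2 v2. (of_int s1, of_int t1) \<in> S \<and> (of_int s2, of_int t2) \<in> S
       \<and> h \<le> (s2+t2)-(s1+t1) \<and> (of_int u1, of_int v1) \<in> S \<and> (of_int u2, of_int v2) \<in> S \<and> h \<le> (u2-v2)-(u1-v1)"
proof -
  obtain s t where st: "s \<in> T" "t \<in> T" "h \<le> (fst t + snd t) - (fst s + snd s)" using assms(2) by blast
  obtain u v where uv: "u \<in> T" "v \<in> T" "h \<le> (fst v - snd v) - (fst u - snd u)" using assms(3) by blast
  show ?thesis
    apply (rule exI[of _ "fst s"], rule exI[of _ "snd s"], rule exI[of _ "fst t"], rule exI[of _ "snd t"])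
    apply (rule exI[of _ "fst u"], rule exI[of _ "snd u"], rule exI[of _ "fst v"], rule exI[of _ "snd v"])
    using st uv assms(1) by blast
qed

lemma nonmin_from:
  assumes P: "prm h a b c d" and lp: "lattice_polygon P'" and sub: "P' \<subseteq> quadQ h a b c d"
    and ne: "P' \<noteq> quadQ h a b c d" and ge: "of_int h \<le> ls_square P'"
  shows "\<not> minimal_polygon (quadQ h a b c d)"
proof -
  have h0: "0 \<le> (of_int h :: real)" using P unfolding prm_def by simp
  obtain f where "unimodular_affine f" "f ` P' \<subseteq> (\<lambda>p. of_int h *\<^sub>R p) ` unit_square"
    using id_box[OF P sub] by blast
  then have "ls_square P' \<le> of_int h" using ls_le h0 by blast
  then have "ls_square P' = ls_square (quadQ h a b c d)" using ge Q_ls[OF P] by simp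
  then show ?thesis unfolding minimal_polygon_def using lp sub ne by blast
qed

lemma dropA:
  assumes P: "prm h a b c d" and D1: "min c d + min b (a+1) \<le> h" and D2: "h \<le> max c (a-1) + max b d"
  shows "\<not> minimal_polygon (quadQ h a b c d)"
proof -
  have h: "2 \<le> h" "1 \<le> a" "a \<le> h-1" "1 \<le> b" "b \<le> h-1" "1 \<le> c" "c \<le> h-1" "1 \<le> d" "d \<le> h-1"
    using P unfolding prm_def by auto
  define P' :: "(real \<times> real) set" where "P' = convex hull {(of_int a, of_int 1), (of_int 0, of_int b),
     (of_int h, of_int (h-c)), (of_int (h-d), of_int h)}"
  have zQ: "(of_int a, of_int 1) \<in> quadQ h a b c d"
  proof (rule Q_mem_int[OF P])
    show "a * b \<le> b * a + a * 1" using h by simp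
    have "(h-d) * 1 \<le> (h-d) * b" "0 \<le> (h-b) * a" using h by (simp_all add: mult_left_mono)
    then show "(h-d) * 1 - (h-b) * a \<le> (h-d) * b" by linarith
    have "c * (a+d-h) \<le> (h-1) * (d-1)" using h by (intro ml) auto
    moreover have "(h-1) * (d-1) \<le> (h-1) * d" using h by (intro mult_left_mono) auto
    ultimately show "c * a + d * 1 \<le> c * (h-d) + d * h" by (simp add: algebra_simps)
    show "(h-c) * a - (h-a) * 1 \<le> (h-c) * a" using h by simp
  qed
  have cQ: "convex (quadQ h a b c d)" unfolding quadQ_def by (rule convex_convex_hull)
  have sub: "P' \<subseteq> quadQ h a b c d" unfolding P'_def
    by (rule hull_minimal) (use zQ Q_vert cQ in auto)
  have lp: "lattice_polygon P'" unfolding lattice_polygon_def P'_def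
    by (rule exI[of _ "{(of_int a, of_int 1), (of_int 0, of_int b), (of_int h, of_int (h-c)), (of_int (h-d), of_int h)}"])
       (auto simp: lattice_point_def)
  have mem: "(of_int a, of_int 1) \<in> P'" "(of_int 0, of_int b) \<in> P'" "(of_int h, of_int (h-c)) \<in> P'"
     "(of_int (h-d), of_int h) \<in> P'"
    unfolding P'_def by (auto intro: hull_subset[THEN subsetD])
  have ne: "P' \<noteq> quadQ h a b c d"
  proof
    assume eq: "P' = quadQ h a b c d"
    have "\<forall>v\<in>{(of_int a, of_int 1), (of_int 0, of_int b), (of_int h, of_int (h-c)), (of_int (h-d), of_int h)}.
        0 * fst v + (-1) * snd v \<le> (-1::real)" using h by auto
    from hull_lin[OF this] have "\<forall>p\<in>P'. 0 * fst p + (-1) * snd p \<le> (-1::real)" unfolding P'_def by blast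
    moreover have "(of_int a, of_int 0) \<in> P'" using eq Q_vert(1) by simp
    ultimately show False by auto
  qed
  have ge: "of_int h \<le> ls_square P'"
  proof (rule ls_ge2[OF id_box[OF P sub]])
    show "0 \<le> (of_int h :: real)" using h by simp
    fix f l assume f: "unimodular_affine f" "f ` P' \<subseteq> (\<lambda>p. l *\<^sub>R p) ` unit_square" "0 \<le> l"
    define T where "T = {(a,1), (0,b), (h,h-c), (h-d,h)}"
    have DDf: "\<exists>s1 t1 s2 t2 u1 v1 u2 v2. (of_int s1, of_int t1) \<in> P' \<and> (of_int s2, of_int t2) \<in> P'
       \<and> h \<le> (s2+t2)-(s1+t1) \<and> (of_int u1, of_int v1) \<in> P' \<and> (of_int u2, of_int v2) \<in> P' \<and> h \<le> (u2-v2)-(u1-v1)"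
    proof (rule DD_help[of T])
      show "\<forall>p\<in>T. (of_int (fst p), of_int (snd p)) \<in> P'" unfolding T_def using mem by auto
      show "\<exists>s\<in>T. \<exists>t\<in>T. h \<le> fst t + snd t - (fst s + snd s)" unfolding T_def using D1 h
        by (auto simp: min_def split: if_splits)
      show "\<exists>u\<in>T. \<exists>v\<in>T. h \<le> fst v - snd v - (fst u - snd u)" unfolding T_def using D2 h
        by (auto simp: max_def split: if_splits)
    qed
    show "of_int h \<le> l"
    proof (rule LB[OF h(1) _ _ _ _ _ _ _ _ _ _ f, of h "h-1" "h-c-b" "h-d-a" 0 b a 1])
      show "(of_int 0, of_int b) \<in> P'" by (rule mem)
      show "(of_int (0 + h), of_int (b + (h - c - b))) \<in> P'" using mem(3) by simp
      show "(of_int a, of_int 1) \<in> P'" by (rule mem)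
      show "(of_int (a + (h - d - a)), of_int (1 + (h - 1))) \<in> P'" using mem(4) by simp
      show "\<bar>h - c - b\<bar> \<le> h - 2" "\<bar>h - d - a\<bar> \<le> h - 2" using h by auto
    qed (use DDf in auto)
  qed
  show ?thesis by (rule nonmin_from[OF P lp sub ne ge])
qed

lemma dropB:
  assumes P: "prm h a b c d" and D1: "min c d + min a (b+1) \<le> h" and D2: "h \<le> max a c + max (b-1) d"
  shows "\<not> minimal_polygon (quadQ h a b c d)"
proof -
  have h: "2 \<le> h" "1 \<le> a" "a \<le> h-1" "1 \<le> b" "b \<le> h-1" "1 \<le> c" "c \<le> h-1" "1 \<le> d" "d \<le> h-1"
    using P unfolding prm_def by auto
  define P' :: "(real \<times> real) set" where "P' = convex hull {(of_int 1, of_int b), (of_int a, of_int 0), (of_int h, of_int (h-c)), (of_int (h-d), of_int h)}"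
  have zQ: "(of_int 1, of_int b) \<in> quadQ h a b c d"
  proof (rule Q_mem_int[OF P])
    show "a * b \<le> b * 1 + a * b" using h by simp
    show "(h-d) * b - (h-b) * 1 \<le> (h-d) * b" using h by simp
    have "c * (d+1-h) \<le> 0" "d * b \<le> d * h" using h by (simp_all add: mult_nonneg_nonpos mult_left_mono)
    then show "c * 1 + d * b \<le> c * (h-d) + d * h" by (simp add: algebra_simps)
    have "(h-c) * 1 \<le> (h-c) * a" "0 \<le> (h-a) * b" using h by (simp_all add: mult_left_mono)
    then show "(h-c) * 1 - (h-a) * b \<le> (h-c) * a" by linarith
  qed
  have cQ: "convex (quadQ h a b c d)" unfolding quadQ_def by (rule convex_convex_hull)
  have vQ: "(of_int a, of_int 0) \<in> quadQ h a b c d" "(of_int 0, of_int b) \<in> quadQ h a b c d"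
    "(of_int h, of_int (h-c)) \<in> quadQ h a b c d" "(of_int (h-d), of_int h) \<in> quadQ h a b c d"
    using Q_vert by auto
  have sub: "P' \<subseteq> quadQ h a b c d" unfolding P'_def
    by (rule hull_minimal) (use zQ vQ cQ in auto)
  have lp: "lattice_polygon P'" unfolding lattice_polygon_def P'_def
    by (rule exI[of _ "{(of_int 1, of_int b), (of_int a, of_int 0), (of_int h, of_int (h-c)), (of_int (h-d), of_int h)}"]) (auto simp: lattice_point_def)
  have mem: "(of_int 1, of_int b) \<in> P'" "(of_int a, of_int 0) \<in> P'" "(of_int h, of_int (h-c)) \<in> P'" "(of_int (h-d), of_int h) \<in> P'"
    unfolding P'_def by (auto intro: hull_subset[THEN subsetD])
  have ne: "P' \<noteq> quadQ h a b c d"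
  proof
    assume eq: "P' = quadQ h a b c d"
    have "\<forall>v\<in>{(of_int 1, of_int b), (of_int a, of_int 0), (of_int h, of_int (h-c)), (of_int (h-d), of_int h)}. (-1) * fst v + 0 * snd v \<le> (-1::real)" using h by auto
    from hull_lin[OF this] have "\<forall>p\<in>P'. (-1) * fst p + 0 * snd p \<le> (-1::real)" unfolding P'_def by blast
    moreover have "(of_int 0, of_int b) \<in> P'" using eq vQ by simp
    ultimately show False by auto
  qed
  have ge: "of_int h \<le> ls_square P'"
  proof (rule ls_ge2[OF id_box[OF P sub]])
    show "0 \<le> (of_int h :: real)" using h by simp
    fix f l assume f: "unimodular_affine f" "f ` P' \<subseteq> (\<lambda>p. l *\<^sub>R p) ` unit_square" "0 \<le> l"
    define T where "T = {(1,b), (a,0), (h,h-c), (h-d,h)}"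
    have DDf: "\<exists>s1 t1 s2 t2 u1 v1 u2 v2. (of_int s1, of_int t1) \<in> P' \<and> (of_int s2, of_int t2) \<in> P'
       \<and> h \<le> (s2+t2)-(s1+t1) \<and> (of_int u1, of_int v1) \<in> P' \<and> (of_int u2, of_int v2) \<in> P' \<and> h \<le> (u2-v2)-(u1-v1)"
    proof (rule DD_help[of T])
      show "\<forall>p\<in>T. (of_int (fst p), of_int (snd p)) \<in> P'" unfolding T_def using mem by auto
      show "\<exists>s\<in>T. \<exists>t\<in>T. h \<le> fst t + snd t - (fst s + snd s)" unfolding T_def using D1 h
        by (auto simp: min_def split: if_splits)
      show "\<exists>u\<in>T. \<exists>v\<in>T. h \<le> fst v - snd v - (fst u - snd u)" unfolding T_def using D2 h
        by (auto simp: max_def split: if_splits)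
    qed
    show "of_int h \<le> l"
    proof (rule LB[OF h(1) _ _ _ _ _ _ _ _ _ _ f, of "h-1" h "h-c-b" "h-d-a" 1 b a 0])
      show "(of_int 1, of_int b) \<in> P'" using mem by simp
      show "(of_int (1 + (h - 1)), of_int (b + (h - c - b))) \<in> P'" using mem by simp
      show "(of_int a, of_int 0) \<in> P'" using mem by simp
      show "(of_int (a + (h - d - a)), of_int (0 + h)) \<in> P'" using mem by simp
      show "\<bar>h - c - b\<bar> \<le> h - 2" "\<bar>h - d - a\<bar> \<le> h - 2" using h by auto
    qed (use DDf in auto)
  qed
  show ?thesis by (rule nonmin_from[OF P lp sub ne ge])
qed

lemma dropC:
  assumes P: "prm h a b c d" and D1: "min (c+1) d + min a b \<le> h" and D2: "h \<le> max a (c-1) + max b d"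
  shows "\<not> minimal_polygon (quadQ h a b c d)"
proof -
  have h: "2 \<le> h" "1 \<le> a" "a \<le> h-1" "1 \<le> b" "b \<le> h-1" "1 \<le> c" "c \<le> h-1" "1 \<le> d" "d \<le> h-1"
    using P unfolding prm_def by auto
  define P' :: "(real \<times> real) set" where "P' = convex hull {(of_int (h-1), of_int (h-c)), (of_int a, of_int 0), (of_int 0, of_int b), (of_int (h-d), of_int h)}"
  have zQ: "(of_int (h-1), of_int (h-c)) \<in> quadQ h a b c d"
  proof (rule Q_mem_int[OF P])
    have "b * a \<le> b * (h-1)" "0 \<le> a * (h-c)" using h by (simp_all add: mult_left_mono)
    then show "a * b \<le> b * (h-1) + a * (h-c)" by (simp add: algebra_simps)
    have "(h-d) * (h-c-b) \<le> (h-1) * (h-b)" using h by (intro ml) auto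
    then show "(h-d) * (h-c) - (h-b) * (h-1) \<le> (h-d) * b" by (simp add: algebra_simps)
    show "c * (h-1) + d * (h-c) \<le> c * (h-d) + d * h" using h by (simp add: algebra_simps)
    have "(h-c) * (a-1) \<le> (h-c) * a" using h by (intro mult_left_mono) auto
    then show "(h-c) * (h-1) - (h-a) * (h-c) \<le> (h-c) * a" by (simp add: algebra_simps)
  qed
  have cQ: "convex (quadQ h a b c d)" unfolding quadQ_def by (rule convex_convex_hull)
  have vQ: "(of_int a, of_int 0) \<in> quadQ h a b c d" "(of_int 0, of_int b) \<in> quadQ h a b c d"
    "(of_int h, of_int (h-c)) \<in> quadQ h a b c d" "(of_int (h-d), of_int h) \<in> quadQ h a b c d"
    using Q_vert by auto
  have sub: "P' \<subseteq> quadQ h a b c d" unfolding P'_def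
    by (rule hull_minimal) (use zQ vQ cQ in auto)
  have lp: "lattice_polygon P'" unfolding lattice_polygon_def P'_def
    by (rule exI[of _ "{(of_int (h-1), of_int (h-c)), (of_int a, of_int 0), (of_int 0, of_int b), (of_int (h-d), of_int h)}"]) (auto simp: lattice_point_def)
  have mem: "(of_int (h-1), of_int (h-c)) \<in> P'" "(of_int a, of_int 0) \<in> P'" "(of_int 0, of_int b) \<in> P'" "(of_int (h-d), of_int h) \<in> P'"
    unfolding P'_def by (auto intro: hull_subset[THEN subsetD])
  have ne: "P' \<noteq> quadQ h a b c d"
  proof
    assume eq: "P' = quadQ h a b c d"
    have "\<forall>v\<in>{(of_int (h-1), of_int (h-c)), (of_int a, of_int 0), (of_int 0, of_int b), (of_int (h-d), of_int h)}. 1 * fst v + 0 * snd v \<le> (of_int h - 1::real)" using h by auto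
    from hull_lin[OF this] have "\<forall>p\<in>P'. 1 * fst p + 0 * snd p \<le> (of_int h - 1::real)" unfolding P'_def by blast
    moreover have "(of_int h, of_int (h-c)) \<in> P'" using eq vQ by simp
    ultimately show False by auto
  qed
  have ge: "of_int h \<le> ls_square P'"
  proof (rule ls_ge2[OF id_box[OF P sub]])
    show "0 \<le> (of_int h :: real)" using h by simp
    fix f l assume f: "unimodular_affine f" "f ` P' \<subseteq> (\<lambda>p. l *\<^sub>R p) ` unit_square" "0 \<le> l"
    define T where "T = {(h-1,h-c), (a,0), (0,b), (h-d,h)}"
    have DDf: "\<exists>s1 t1 s2 t2 u1 v1 u2 v2. (of_int s1, of_int t1) \<in> P' \<and> (of_int s2, of_int t2) \<in> P'
       \<and> h \<le> (s2+t2)-(s1+t1) \<and> (of_int u1, of_int v1) \<in> P' \<and> (of_int u2, of_int v2) \<in> P' \<and> h \<le> (u2-v2)-(u1-v1)"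
    proof (rule DD_help[of T])
      show "\<forall>p\<in>T. (of_int (fst p), of_int (snd p)) \<in> P'" unfolding T_def using mem by auto
      show "\<exists>s\<in>T. \<exists>t\<in>T. h \<le> fst t + snd t - (fst s + snd s)" unfolding T_def using D1 h
        by (auto simp: min_def split: if_splits)
      show "\<exists>u\<in>T. \<exists>v\<in>T. h \<le> fst v - snd v - (fst u - snd u)" unfolding T_def using D2 h
        by (auto simp: max_def split: if_splits)
    qed
    show "of_int h \<le> l"
    proof (rule LB[OF h(1) _ _ _ _ _ _ _ _ _ _ f, of "h-1" h "h-c-b" "h-d-a" 0 b a 0])
      show "(of_int 0, of_int b) \<in> P'" using mem by simp
      show "(of_int (0 + (h - 1)), of_int (b + (h - c - b))) \<in> P'" using mem by simp
      show "(of_int a, of_int 0) \<in> P'" using mem by simp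
      show "(of_int (a + (h - d - a)), of_int (0 + h)) \<in> P'" using mem by simp
      show "\<bar>h - c - b\<bar> \<le> h - 2" "\<bar>h - d - a\<bar> \<le> h - 2" using h by auto
    qed (use DDf in auto)
  qed
  show ?thesis by (rule nonmin_from[OF P lp sub ne ge])
qed

lemma dropD:
  assumes P: "prm h a b c d" and D1: "min c (d+1) + min a b \<le> h" and D2: "h \<le> max a c + max b (d-1)"
  shows "\<not> minimal_polygon (quadQ h a b c d)"
proof -
  have h: "2 \<le> h" "1 \<le> a" "a \<le> h-1" "1 \<le> b" "b \<le> h-1" "1 \<le> c" "c \<le> h-1" "1 \<le> d" "d \<le> h-1"
    using P unfolding prm_def by auto
  define P' :: "(real \<times> real) set" where "P' = convex hull {(of_int (h-d), of_int (h-1)), (of_int a, of_int 0), (of_int 0, of_int b), (of_int h, of_int (h-c))}"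
  have zQ: "(of_int (h-d), of_int (h-1)) \<in> quadQ h a b c d"
  proof (rule Q_mem_int[OF P])
    have "a * b \<le> a * (h-1)" "0 \<le> b * (h-d)" using h by (simp_all add: mult_left_mono)
    then show "a * b \<le> b * (h-d) + a * (h-1)" by (simp add: algebra_simps)
    have "(h-d) * (b-1) \<le> (h-d) * b" using h by (intro mult_left_mono) auto
    then show "(h-d) * (h-1) - (h-b) * (h-d) \<le> (h-d) * b" by (simp add: algebra_simps)
    show "c * (h-d) + d * (h-1) \<le> c * (h-d) + d * h" using h by (simp add: algebra_simps)
    have "(h-c) * (h-d-a) \<le> (h-1) * (h-a)" using h by (intro ml) auto
    then show "(h-c) * (h-d) - (h-a) * (h-1) \<le> (h-c) * a" by (simp add: algebra_simps)
  qed
  have cQ: "convex (quadQ h a b c d)" unfolding quadQ_def by (rule convex_convex_hull)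
  have vQ: "(of_int a, of_int 0) \<in> quadQ h a b c d" "(of_int 0, of_int b) \<in> quadQ h a b c d"
    "(of_int h, of_int (h-c)) \<in> quadQ h a b c d" "(of_int (h-d), of_int h) \<in> quadQ h a b c d"
    using Q_vert by auto
  have sub: "P' \<subseteq> quadQ h a b c d" unfolding P'_def
    by (rule hull_minimal) (use zQ vQ cQ in auto)
  have lp: "lattice_polygon P'" unfolding lattice_polygon_def P'_def
    by (rule exI[of _ "{(of_int (h-d), of_int (h-1)), (of_int a, of_int 0), (of_int 0, of_int b), (of_int h, of_int (h-c))}"]) (auto simp: lattice_point_def)
  have mem: "(of_int (h-d), of_int (h-1)) \<in> P'" "(of_int a, of_int 0) \<in> P'" "(of_int 0, of_int b) \<in> P'" "(of_int h, of_int (h-c)) \<in> P'"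
    unfolding P'_def by (auto intro: hull_subset[THEN subsetD])
  have ne: "P' \<noteq> quadQ h a b c d"
  proof
    assume eq: "P' = quadQ h a b c d"
    have "\<forall>v\<in>{(of_int (h-d), of_int (h-1)), (of_int a, of_int 0), (of_int 0, of_int b), (of_int h, of_int (h-c))}. 0 * fst v + 1 * snd v \<le> (of_int h - 1::real)" using h by auto
    from hull_lin[OF this] have "\<forall>p\<in>P'. 0 * fst p + 1 * snd p \<le> (of_int h - 1::real)" unfolding P'_def by blast
    moreover have "(of_int (h-d), of_int h) \<in> P'" using eq vQ by simp
    ultimately show False by auto
  qed
  have ge: "of_int h \<le> ls_square P'"
  proof (rule ls_ge2[OF id_box[OF P sub]])
    show "0 \<le> (of_int h :: real)" using h by simp
    fix f l assume f: "unimodular_affine f" "f ` P' \<subseteq> (\<lambda>p. l *\<^sub>R p) ` unit_square" "0 \<le> l"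
    define T where "T = {(h-d,h-1), (a,0), (0,b), (h,h-c)}"
    have DDf: "\<exists>s1 t1 s2 t2 u1 v1 u2 v2. (of_int s1, of_int t1) \<in> P' \<and> (of_int s2, of_int t2) \<in> P'
       \<and> h \<le> (s2+t2)-(s1+t1) \<and> (of_int u1, of_int v1) \<in> P' \<and> (of_int u2, of_int v2) \<in> P' \<and> h \<le> (u2-v2)-(u1-v1)"
    proof (rule DD_help[of T])
      show "\<forall>p\<in>T. (of_int (fst p), of_int (snd p)) \<in> P'" unfolding T_def using mem by auto
      show "\<exists>s\<in>T. \<exists>t\<in>T. h \<le> fst t + snd t - (fst s + snd s)" unfolding T_def using D1 h
        by (auto simp: min_def split: if_splits)
      show "\<exists>u\<in>T. \<exists>v\<in>T. h \<le> fst v - snd v - (fst u - snd u)" unfolding T_def using D2 h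
        by (auto simp: max_def split: if_splits)
    qed
    show "of_int h \<le> l"
    proof (rule LB[OF h(1) _ _ _ _ _ _ _ _ _ _ f, of h "h-1" "h-c-b" "h-d-a" 0 b a 0])
      show "(of_int 0, of_int b) \<in> P'" using mem by simp
      show "(of_int (0 + h), of_int (b + (h - c - b))) \<in> P'" using mem by simp
      show "(of_int a, of_int 0) \<in> P'" using mem by simp
      show "(of_int (a + (h - d - a)), of_int (0 + (h - 1))) \<in> P'" using mem by simp
      show "\<bar>h - c - b\<bar> \<le> h - 2" "\<bar>h - d - a\<bar> \<le> h - 2" using h by auto
    qed (use DDf in auto)
  qed
  show ?thesis by (rule nonmin_from[OF P lp sub ne ge])
qed

lemma cover:
  fixes h a b c d :: int
  assumes h: "2 \<le> h" "1 \<le> a" "a \<le> h-1" "1 \<le> b" "b \<le> h-1" "1 \<le> c" "c \<le> h-1" "1 \<le> d" "d \<le> h-1"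
   and nA: "min a b + min c d \<le> h" and nB: "h \<le> max a c + max b d"
  shows "(min c d + min b (a+1) \<le> h \<and> h \<le> max c (a-1) + max b d)
       \<or> (min c d + min a (b+1) \<le> h \<and> h \<le> max a c + max (b-1) d)
       \<or> (min (c+1) d + min a b \<le> h \<and> h \<le> max a (c-1) + max b d)
       \<or> (min c (d+1) + min a b \<le> h \<and> h \<le> max a c + max b (d-1))"
  using nA nB
  by (cases "a \<le> b"; cases "c \<le> d"; cases "a \<le> c"; cases "b \<le> d"; simp add: min_def max_def split: if_splits; linarith)

theorem mainTheorem7:
  fixes h a b c d :: int
  assumes "h \<ge> 2"
    and "a \<in> {1..h-1}" and "b \<in> {1..h-1}" and "c \<in> {1..h-1}" and "d \<in> {1..h-1}"
  shows "ls_square (quadQ h a b c d) = of_int h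
    \<and> (minimal_polygon (quadQ h a b c d) \<longleftrightarrow> condA h a b c d \<or> condB h a b c d)
    \<and> \<not> (condA h a b c d \<and> condB h a b c d)
    \<and> (condA h a b c d \<or> condB h a b c d \<longrightarrow>
        (\<exists>a' b' c' d'. a' \<in> {1..h-1} \<and> b' \<in> {1..h-1} \<and> c' \<in> {1..h-1} \<and> d' \<in> {1..h-1} \<and>
           lattice_equivalent (quadQ h a b c d) (quadQ h a' b' c' d') \<and>
           (condA h a b c d \<longrightarrow> condB h a' b' c' d') \<and>
           (condB h a b c d \<longrightarrow> condA h a' b' c' d')))"
proof -
  have P: "prm h a b c d" using assms unfolding prm_def by auto
  have h: "2 \<le> h" "1 \<le> a" "a \<le> h-1" "1 \<le> b" "b \<le> h-1" "1 \<le> c" "c \<le> h-1" "1 \<le> d" "d \<le> h-1"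
    using P unfolding prm_def by auto
  have mn: "minimal_polygon (quadQ h a b c d) \<longleftrightarrow> condA h a b c d \<or> condB h a b c d"
  proof
    assume m: "minimal_polygon (quadQ h a b c d)"
    show "condA h a b c d \<or> condB h a b c d"
    proof (rule ccontr)
      assume "\<not> (condA h a b c d \<or> condB h a b c d)"
      then have nA: "min a b + min c d \<le> h" and nB: "h \<le> max a c + max b d"
        unfolding condA_def condB_def by auto
      from cover[OF h nA nB] show False
        using dropA[OF P] dropB[OF P] dropC[OF P] dropD[OF P] m by blast
    qed
  next
    assume "condA h a b c d \<or> condB h a b c d"
    then show "minimal_polygon (quadQ h a b c d)" by (rule min_dir[OF P])
  qed
  have eqv: "condA h a b c d \<or> condB h a b c d \<longrightarrow>
        (\<exists>a' b' c' d'. a' \<in> {1..h-1} \<and> b' \<in> {1..h-1} \<and> c' \<in> {1..h-1} \<and> d' \<in> {1..h-1} \<and>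
           lattice_equivalent (quadQ h a b c d) (quadQ h a' b' c' d') \<and>
           (condA h a b c d \<longrightarrow> condB h a' b' c' d') \<and>
           (condB h a b c d \<longrightarrow> condA h a' b' c' d'))"
  proof
    assume "condA h a b c d \<or> condB h a b c d"
    show "\<exists>a' b' c' d'. a' \<in> {1..h-1} \<and> b' \<in> {1..h-1} \<and> c' \<in> {1..h-1} \<and> d' \<in> {1..h-1} \<and>
           lattice_equivalent (quadQ h a b c d) (quadQ h a' b' c' d') \<and>
           (condA h a b c d \<longrightarrow> condB h a' b' c' d') \<and>
           (condB h a b c d \<longrightarrow> condA h a' b' c' d')"
      apply (rule exI[of _ "h-d"], rule exI[of _ "h-b"], rule exI[of _ "h-c"], rule exI[of _ "h-a"])
      using h reflect_equiv reflect_cond by auto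
  qed
  show ?thesis using Q_ls[OF P] mn not_both eqv by blast
qed

end
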